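(* Let $P_1:\mathbb R^n\to\mathbb R$ be convex and continuous, $A_1\in\mathbb R^{q_1\times n}$, $l_1:\mathbb R^{q_1}\to\mathbb R$ strictly convex with $\{x:l_1(A_1x)\le0\}\neq\emptyset$, and $F(x):=P_1(x)+\delta_{\{l_1(A_1\cdot)\le0\}}(x)$. Suppose (i) $\inf P_1<\inf F$, and (ii) there is a Lagrange multiplier $\bar\lambda\ge0$ for $\min_xF(x)$ such that $x\mapsto P_1(x)+\bar\lambda\,l_1(A_1x)$ is a KL function with exponent $\alpha\in(0,1)$. Then $F$ is a KL function with exponent $\alpha$.
   Context: $\delta_C$ denotes the indicator function of $C$ ($0$ on $C$, $+\infty$ outside); $\partial$ is the convex subdifferential. A Lagrange multiplier for $\min_xF(x)$ is a number $\bar\lambda\ge0$ with $\inf_{x}\{P_1(x)+\bar\lambda l_1(A_1x)\}=\inf_xF(x)>-\infty$. KL function with exponent $\alpha\in[0,1)$: a proper closed $h$ such that at every $\hat x\in{\rm dom}\,\partial h$ there exist $a\in(0,\infty]$, a neighborhood $V$ of $\hat x$ and $a_0>0$ with $a_0(1-\alpha)(h(x)-h(\hat x))^{-\alpha}\,{\rm dist}(0,\partial h(x))\ge1$ for all $x\in V$ with $h(\hat x)<h(x)<h(\hat x)+a$. *)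

theory Defs
  imports "HOL-Analysis.Analysis"
begin

definition strictly_convex :: "('a::real_vector \<Rightarrow> real) \<Rightarrow> bool" where
  "strictly_convex f \<longleftrightarrow> (\<forall>x y u. x \<noteq> y \<and> 0 < u \<and> u < 1 \<longrightarrow>
      f ((1 - u) *\<^sub>R x + u *\<^sub>R y) < (1 - u) * f x + u * f y)"

definition proper_fun :: "('a \<Rightarrow> ereal) \<Rightarrow> bool" where
  "proper_fun h \<longleftrightarrow> (\<forall>x. h x \<noteq> -\<infinity>) \<and> (\<exists>x. h x \<noteq> \<infinity>)"

definition closed_fun :: "('a::topological_space \<Rightarrow> ereal) \<Rightarrow> bool" where
  "closed_fun h \<longleftrightarrow> closed {p :: 'a \<times> real. h (fst p) \<le> ereal (snd p)}"

definition indicator_fun :: "'a set \<Rightarrow> 'a \<Rightarrow> ereal" where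
  "indicator_fun C x = (if x \<in> C then 0 else \<infinity>)"

definition subdiff :: "('a::real_inner \<Rightarrow> ereal) \<Rightarrow> 'a \<Rightarrow> 'a set" where
  "subdiff h x = {v. \<bar>h x\<bar> \<noteq> \<infinity> \<and> (\<forall>y. h y \<ge> h x + ereal (v \<bullet> (y - x)))}"

definition dom_subdiff :: "('a::real_inner \<Rightarrow> ereal) \<Rightarrow> 'a set" where
  "dom_subdiff h = {x. subdiff h x \<noteq> {}}"

text \<open>dist(0, empty set) = +infinity, so the KL inequality holds vacuously when the
  subdifferential is empty; this is encoded by the premise subdiff h x \<noteq> {}.\<close>
definition KL_exponent :: "('a::real_inner \<Rightarrow> ereal) \<Rightarrow> real \<Rightarrow> bool" where
  "KL_exponent h \<alpha> \<longleftrightarrow> proper_fun h \<and> closed_fun h \<and>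
     (\<forall>xh \<in> dom_subdiff h. \<exists>a::ereal. a > 0 \<and> (\<exists>V a0. open V \<and> xh \<in> V \<and> a0 > (0::real) \<and>
        (\<forall>x\<in>V. h xh < h x \<and> h x < h xh + a \<and> subdiff h x \<noteq> {} \<longrightarrow>
           a0 * (1 - \<alpha>) * (real_of_ereal (h x - h xh)) powr (- \<alpha>)
             * infdist 0 (subdiff h x) \<ge> 1)))"

end

theory Submission
  imports Defs
begin



lemma powr_tangent:
  fixes s t b :: real
  assumes "0 \<le> s" "0 < t" "0 < b" "b < 1"
  shows "s powr b \<le> t powr b + b * t powr (b - 1) * (s - t)"
proof (cases "s = 0")
  case True
  have "t powr (b - 1) * t = t powr b"
    using assms by (simp add: powr_diff)
  then show ?thesis using True assms
    by (simp add: algebra_simps)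
next
  case False
  then have sp: "s > 0" using assms by simp
  have Y: "s powr b * t powr (1 - b) \<le> b * s + (1 - b) * t"
    using Youngs_inequality_0[of b "1-b" s t] assms sp by simp
  have "s powr b = s powr b * t powr (1 - b) * t powr (b - 1)"
    using assms by (simp add: powr_add[symmetric])
  also have "\<dots> \<le> (b * s + (1 - b) * t) * t powr (b - 1)"
    using Y by (intro mult_right_mono) auto
  also have "\<dots> = t powr b + b * t powr (b - 1) * (s - t)"
  proof -
    have "t * t powr (b - 1) = t powr b" using assms
      by (simp add: powr_diff)
    then show ?thesis by (simp add: algebra_simps)
  qed
  finally show ?thesis .
qed


lemma prox_exists:
  fixes g :: "'a::euclidean_space \<Rightarrow> real"
  assumes cont: "continuous_on UNIV g" and nn: "\<And>x. g x \<ge> 0" and t: "t > 0"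
  shows "\<exists>p. \<forall>y. g p + (norm (p - z))\<^sup>2 / (2*t) \<le> g y + (norm (y - z))\<^sup>2 / (2*t)"
proof -
  define R where "R = 2*t*g z + 1"
  have R1: "R \<ge> 1" using nn t by (simp add: R_def)
  have "continuous_on (cball z R) (\<lambda>y. g y + (norm (y - z))\<^sup>2 / (2*t))"
    using t by (intro continuous_intros continuous_on_subset[OF cont]) auto
  then obtain p where p: "p \<in> cball z R" "\<And>y. y \<in> cball z R \<Longrightarrow> g p + (norm (p - z))\<^sup>2 / (2*t) \<le> g y + (norm (y - z))\<^sup>2 / (2*t)"
    using continuous_attains_inf[of "cball z R"] R1 by fastforce
  have pz: "g p + (norm (p - z))\<^sup>2 / (2*t) \<le> g z"
    using p(2)[of z] R1 by simp
  show ?thesis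
  proof (intro exI allI)
    fix y
    show "g p + (norm (p - z))\<^sup>2 / (2*t) \<le> g y + (norm (y - z))\<^sup>2 / (2*t)"
    proof (cases "y \<in> cball z R")
      case True then show ?thesis using p(2) by blast
    next
      case False
      then have "norm (y - z) > R" by (simp add: dist_norm norm_minus_commute)
      then have "(norm (y - z))\<^sup>2 \<ge> R\<^sup>2" using R1 by (intro power_mono) auto
      moreover have "R\<^sup>2 \<ge> R" using R1 by (simp add: power2_eq_square)
      ultimately have "(norm (y - z))\<^sup>2 \<ge> 2*t*g z" unfolding R_def by linarith
      then have "(norm (y - z))\<^sup>2 / (2*t) \<ge> g z" using t by (simp add: field_simps)
      then show ?thesis using pz nn[of y] by linarith
    qed
  qed
qed

lemma prox_subgrad:
  fixes g :: "'a::euclidean_space \<Rightarrow> real"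
  assumes conv: "convex_on UNIV g" and t: "t > 0"
    and pmin: "\<And>y. g p + (norm (p - z))\<^sup>2 / (2*t) \<le> g y + (norm (y - z))\<^sup>2 / (2*t)"
  shows "g p + ((1/t) *\<^sub>R (z - p)) \<bullet> (y - p) \<le> g y"
proof -
  define d where "d = y - p"
  have key: "g y - g p \<ge> ((1/t) *\<^sub>R (z - p)) \<bullet> d - s * (norm d)\<^sup>2 / (2*t)" if s: "0 < s" "s \<le> 1" for s
  proof -
    define q where "q = p + s *\<^sub>R d"
    have q_eq: "q = (1 - s) *\<^sub>R p + s *\<^sub>R y" by (simp add: q_def d_def algebra_simps)
    have cq: "g q \<le> (1 - s) * g p + s * g y"
      using conv s unfolding q_eq by (intro convex_onD) auto
    have m: "g p + (norm (p - z))\<^sup>2 / (2*t) \<le> g q + (norm (q - z))\<^sup>2 / (2*t)" by (rule pmin)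
    have nq: "(norm (q - z))\<^sup>2 = (norm (p - z))\<^sup>2 + 2 * s * ((p - z) \<bullet> d) + s\<^sup>2 * (norm d)\<^sup>2"
      unfolding q_def power2_norm_eq_inner
      by (simp add: algebra_simps inner_add_left inner_add_right inner_commute power2_eq_square)
    have "s * (g y - g p) \<ge> - (2 * s * ((p - z) \<bullet> d) + s\<^sup>2 * (norm d)\<^sup>2) / (2*t)"
    proof -
      have "(norm (q - z))\<^sup>2 / (2*t) = (norm (p - z))\<^sup>2 / (2*t) + (2 * s * ((p - z) \<bullet> d) + s\<^sup>2 * (norm d)\<^sup>2) / (2*t)"
        unfolding nq by (simp add: add_divide_distrib)
      then have "g p - g q \<le> (2 * s * ((p - z) \<bullet> d) + s\<^sup>2 * (norm d)\<^sup>2) / (2*t)" using m by linarith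
      moreover have "- (2 * s * ((p - z) \<bullet> d) + s\<^sup>2 * (norm d)\<^sup>2) / (2*t) = - ((2 * s * ((p - z) \<bullet> d) + s\<^sup>2 * (norm d)\<^sup>2) / (2*t))" by (simp add: minus_divide_left)
      ultimately show ?thesis using cq by (simp add: algebra_simps)
    qed
    then have "s * (g y - g p) \<ge> s * (((1/t) *\<^sub>R (z - p)) \<bullet> d - s * (norm d)\<^sup>2 / (2*t))"
    proof -
      have "s * (((1/t) *\<^sub>R (z - p)) \<bullet> d - s * (norm d)\<^sup>2 / (2*t)) = - (2 * s * ((p - z) \<bullet> d) + s\<^sup>2 * (norm d)\<^sup>2) / (2*t)"
        using t by (simp add: field_simps power2_eq_square inner_diff_left)
      then show ?thesis using \<open>s * (g y - g p) \<ge> _\<close> by linarith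
    qed
    then show ?thesis using s by simp
  qed
  have "g y - g p \<ge> ((1/t) *\<^sub>R (z - p)) \<bullet> d"
  proof (rule field_le_epsilon)
    fix e :: real assume e: "e > 0"
    define s where "s = min 1 (e * (2*t) / ((norm d)\<^sup>2 + 1))"
    have s0: "0 < s" "s \<le> 1" using e t by (auto simp: s_def intro!: divide_pos_pos add_nonneg_pos)
    have "s * (norm d)\<^sup>2 / (2*t) \<le> e"
    proof -
      have "s \<le> e * (2*t) / ((norm d)\<^sup>2 + 1)" by (simp add: s_def)
      then have "s * ((norm d)\<^sup>2 + 1) \<le> e * (2*t)"
        by (simp add: field_simps add_pos_nonneg)
      then have "s * (norm d)\<^sup>2 \<le> e * (2*t)" using s0 by (smt (verit) mult_nonneg_nonneg zero_le_power2 distrib_left)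
      then show ?thesis using t by (simp add: field_simps)
    qed
    then show "((1/t) *\<^sub>R (z - p)) \<bullet> d \<le> g y - g p + e" using key[OF s0] by linarith
  qed
  then show ?thesis by (simp add: d_def)
qed
lemma error_bound:
  fixes g :: "'a::euclidean_space \<Rightarrow> real"
  assumes cont: "continuous_on UNIV g" and conv: "convex_on UNIV g" and nn: "\<And>x. g x \<ge> 0"
    and g0: "g xb = 0" and dl: "\<delta> > 0" and a: "a > 0" and c: "c > 0" and al: "0 < \<alpha>" "\<alpha> < 1"
    and KL: "\<And>y w. dist y xb < \<delta> \<Longrightarrow> 0 < g y \<Longrightarrow> g y < a \<Longrightarrow> (\<forall>u. g y + w \<bullet> (u - y) \<le> g u)
               \<Longrightarrow> c * g y powr \<alpha> \<le> norm w"
    and x0: "dist x0 xb < \<delta>/3" "g x0 < a"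
  shows "\<exists>s. g s = 0 \<and> dist x0 s \<le> (5/(c*(1-\<alpha>))) * g x0 powr (1-\<alpha>)"
proof (rule ccontr)
  assume nS: "\<not> ?thesis"
  define C where "C = 5/(c*(1-\<alpha>))"
  define H where "H y = g y powr (1-\<alpha>)" for y
  have C0: "C > 0" using c al by (simp add: C_def)
  have H0: "H y \<ge> 0" for y by (simp add: H_def)
  have CH0: "C * H x0 \<ge> 0" using C0 H0[of x0] by simp
  have hnS: "dist x0 s > C * H x0" if "g s = 0" for s
    using nS that unfolding C_def H_def by force
  have gx0: "g x0 > 0"
  proof (rule ccontr)
    assume "\<not> g x0 > 0" then have "g x0 = 0" using nn[of x0] by simp
    then have "dist x0 x0 > C * H x0" by (rule hnS)
    then show False using C0 H0[of x0] CH0 by simp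
  qed
  define r where "r = dist x0 xb"
  have r: "r > C * H x0" unfolding r_def by (rule hnS[OF g0])
  have r0: "r \<ge> 0" by (simp add: r_def)
  define \<Psi> where "\<Psi> y = C * H y + dist y x0" for y
  have cH: "continuous_on UNIV H"
    unfolding H_def using al nn
    by (intro continuous_on_powr' cont continuous_intros) auto
  have "continuous_on (cball x0 r) \<Psi>"
    unfolding \<Psi>_def by (intro continuous_intros continuous_on_subset[OF cH]) auto
  moreover have "cball x0 r \<noteq> {}" using r0 by auto
  ultimately obtain z where z: "z \<in> cball x0 r" "\<And>y. y \<in> cball x0 r \<Longrightarrow> \<Psi> z \<le> \<Psi> y"
    using continuous_attains_inf[of "cball x0 r" \<Psi>] by fastforce
  have "\<Psi> z \<le> \<Psi> x0" using z(2)[of x0] r0 by simp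
  then have Pz: "C * H z + dist z x0 \<le> C * H x0" by (simp add: \<Psi>_def)
  have "C * H z \<ge> 0" using C0 H0[of z] by simp
  then have dz: "dist z x0 \<le> C * H x0" using Pz by linarith
  have gz: "g z > 0"
  proof (rule ccontr)
    assume "\<not> g z > 0" then have "g z = 0" using nn[of z] by simp
    then have "dist x0 z > C * H x0" by (rule hnS)
    then show False using dz by (simp add: dist_commute)
  qed
  have "C * H z \<le> C * H x0" using Pz zero_le_dist[of z x0] by linarith
  then have "H z \<le> H x0" using C0 by simp
  then have gzx: "g z \<le> g x0"
    unfolding H_def using al powr_less_mono2[of "1-\<alpha>" "g x0" "g z"] nn[of x0] by force
  have dzb: "dist z xb < 2*\<delta>/3"
    using dist_triangle[of z xb x0] dz r x0(1) unfolding r_def by (simp add: dist_commute)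
  define \<rho> where "\<rho> = r - dist z x0"
  have \<rho>: "\<rho> > 0" using dz r by (simp add: \<rho>_def)
  define L where "L = g z powr \<alpha> / (C*(1-\<alpha>))"
  have L0: "L > 0" using gz C0 al by (simp add: L_def)
  have loc: "g y \<ge> g z - L * dist y z" if y: "dist y z < \<rho>" for y
  proof -
    have "dist x0 y \<le> dist x0 z + dist z y" by (rule dist_triangle)
    then have "y \<in> cball x0 r" using y by (simp add: \<rho>_def dist_commute)
    then have "\<Psi> z \<le> \<Psi> y" by (rule z(2))
    moreover have "dist y x0 \<le> dist y z + dist z x0" by (rule dist_triangle)
    ultimately have A: "- dist y z \<le> C * (H y - H z)" by (simp add: \<Psi>_def algebra_simps)
    have T: "H y \<le> H z + (1-\<alpha>) * g z powr (-\<alpha>) * (g y - g z)"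
      unfolding H_def using powr_tangent[of "g y" "g z" "1-\<alpha>"] nn[of y] gz al by simp
    have "- dist y z \<le> (C * (1-\<alpha>) * g z powr (-\<alpha>)) * (g y - g z)"
    proof -
      have "C * (H y - H z) \<le> C * ((1-\<alpha>) * g z powr (-\<alpha>) * (g y - g z))"
        using T C0 by (intro mult_left_mono) auto
      then show ?thesis using A by (simp add: mult.assoc)
    qed
    then have "- dist y z * g z powr \<alpha> \<le> (C * (1-\<alpha>)) * (g y - g z)"
    proof -
      assume h: "- dist y z \<le> (C * (1-\<alpha>) * g z powr (-\<alpha>)) * (g y - g z)"
      have e: "g z powr (-\<alpha>) * g z powr \<alpha> = 1" using gz by (simp add: powr_minus)
      have "- dist y z * g z powr \<alpha> \<le> (C * (1-\<alpha>) * g z powr (-\<alpha>)) * (g y - g z) * g z powr \<alpha>"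
        using h by (intro mult_right_mono) auto
      also have "\<dots> = (C * (1-\<alpha>)) * (g y - g z) * (g z powr (-\<alpha>) * g z powr \<alpha>)" by (simp add: algebra_simps)
      finally show ?thesis using e by simp
    qed
    then have "- dist y z * L \<le> g y - g z"
      using C0 al unfolding L_def by (simp add: field_simps)
    then show ?thesis by (simp add: algebra_simps)
  qed
  define m where "m = min \<rho> (\<delta>/3)"
  have m0: "m > 0" using \<rho> dl by (simp add: m_def)
  define t where "t = min (m\<^sup>2/(4 * g z)) (g z/(4*L\<^sup>2+1))"
  have t0: "t > 0" using m0 gz by (auto simp: t_def intro!: divide_pos_pos add_nonneg_pos)
  obtain p where p: "\<And>y. g p + (norm (p - z))\<^sup>2 / (2*t) \<le> g y + (norm (y - z))\<^sup>2 / (2*t)"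
    using prox_exists[OF cont nn t0, of z] by blast
  define n where "n = norm (p - z)"
  have n0: "n \<ge> 0" by (simp add: n_def)
  have pz: "g p + n\<^sup>2/(2*t) \<le> g z" using p[of z] by (simp add: n_def)
  have "n\<^sup>2/(2*t) \<le> g z" using pz nn[of p] by linarith
  then have "n\<^sup>2 \<le> 2*t*g z" using t0 by (simp add: field_simps)
  also have "\<dots> \<le> 2 * (m\<^sup>2/(4 * g z)) * g z" using gz by (intro mult_right_mono) (auto simp: t_def)
  also have "\<dots> = m\<^sup>2/2" using gz by (simp add: field_simps)
  also have "\<dots> < m\<^sup>2" using m0 by simp
  finally have "n < m" using m0 n0 power_less_imp_less_base[of n 2 m] by linarith
  then have nr: "dist p z < \<rho>" "n < \<delta>/3" by (auto simp: n_def m_def dist_norm)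
  have lp: "g p \<ge> g z - L * n" using loc[OF nr(1)] by (simp add: n_def dist_norm)
  have "n\<^sup>2/(2*t) \<le> L * n" using pz lp by linarith
  then have n2: "n\<^sup>2 \<le> 2*t*L*n" using t0 by (simp add: field_simps)
  have nL: "n \<le> 2*t*L"
  proof (cases "n = 0")
    case True then show ?thesis using t0 L0 by simp
  next
    case False
    then have "n * n \<le> (2*t*L) * n" using n2 by (simp add: power2_eq_square algebra_simps)
    then show ?thesis using False n0 by simp
  qed
  have "L * n \<le> L * (2*t*L)" using nL L0 by simp
  also have "\<dots> = 2 * L\<^sup>2 * t" by (simp add: power2_eq_square)
  also have "\<dots> \<le> 2 * L\<^sup>2 * (g z/(4*L\<^sup>2+1))" by (intro mult_left_mono) (auto simp: t_def)
  also have "\<dots> \<le> g z / 2"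
  proof -
    have "2 * L\<^sup>2 * 2 \<le> 4*L\<^sup>2+1" by simp
    have "2 * L\<^sup>2 * g z * 2 \<le> g z * (4*L\<^sup>2+1)" using gz
      by (simp add: algebra_simps)
    have pos: "4*L\<^sup>2+1 > 0" by (simp add: add_nonneg_pos)
    have "2 * L\<^sup>2 * g z \<le> g z / 2 * (4*L\<^sup>2+1)"
      using \<open>2 * L\<^sup>2 * g z * 2 \<le> g z * (4*L\<^sup>2+1)\<close> by simp
    then have "2 * L\<^sup>2 * g z / (4*L\<^sup>2+1) \<le> g z / 2"
      using pos by (simp add: pos_divide_le_eq)
    then show ?thesis by simp
  qed
  finally have gp2: "g p \<ge> g z / 2" using lp by linarith
  have gp0: "g p > 0" using gp2 gz by linarith
  have "n\<^sup>2/(2*t) \<ge> 0" using t0 by simp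
  then have gpa: "g p < a" using pz gzx x0(2) by linarith
  have dpb: "dist p xb < \<delta>"
    using dist_triangle[of p xb z] dzb nr(2) by (simp add: n_def dist_norm)
  define w where "w = (1/t) *\<^sub>R (z - p)"
  have sg: "\<forall>u. g p + w \<bullet> (u - p) \<le> g u"
    unfolding w_def using prox_subgrad[OF conv t0 p] by blast
  have nw: "norm w = n / t" using t0 by (simp add: w_def n_def norm_minus_commute)
  have "n / t \<le> (2*t*L) / t" using nL t0 by (intro divide_right_mono) auto
  then have "norm w \<le> 2*L" using t0 nw by simp
  moreover have "c * g p powr \<alpha> \<le> norm w" by (rule KL[OF dpb gp0 gpa sg])
  moreover have "g p powr \<alpha> \<ge> g z powr \<alpha> / 2"
  proof -
    have "g p powr \<alpha> \<ge> (g z / 2) powr \<alpha>" using gp2 gz al by (intro powr_mono2) auto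
    moreover have "(g z / 2) powr \<alpha> = g z powr \<alpha> / 2 powr \<alpha>" by (simp add: powr_divide)
    moreover have "2 powr \<alpha> \<le> 2" using powr_mono[of \<alpha> 1 2] al by simp
    moreover have "g z powr \<alpha> / 2 \<le> g z powr \<alpha> / 2 powr \<alpha>"
      using \<open>2 powr \<alpha> \<le> 2\<close> gz by (intro divide_left_mono) auto
    ultimately show ?thesis by linarith
  qed
  ultimately have "c * (g z powr \<alpha> / 2) \<le> 2*L"
    using c mult_left_mono[of "g z powr \<alpha> / 2" "g p powr \<alpha>" c] by linarith
  moreover have "2*L = 2*c*g z powr \<alpha>/5" using c al unfolding L_def C_def by (simp add: field_simps)
  moreover have "g z powr \<alpha> > 0" using gz by simp
  ultimately have "c * g z powr \<alpha> * 5 \<le> c * g z powr \<alpha> * 4" by (simp add: field_simps)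
  moreover have "c * g z powr \<alpha> > 0" using c \<open>g z powr \<alpha> > 0\<close> by simp
  ultimately show False by linarith
qed

lemma infdist_ge_norm:
  fixes A :: "'a::real_normed_vector set"
  assumes "A \<noteq> {}" "\<And>v. v \<in> A \<Longrightarrow> \<eta> \<le> norm v"
  shows "\<eta> \<le> infdist 0 A"
  unfolding infdist_notempty[OF assms(1)]
  by (rule cINF_greatest[OF assms(1)]) (simp add: assms(2) dist_norm)

theorem mainTheorem14:
  fixes P1 :: "real^'n \<Rightarrow> real" and A1 :: "real^'n^'q" and l1 :: "real^'q \<Rightarrow> real"
    and F :: "real^'n \<Rightarrow> ereal" and \<alpha> :: real
  assumes P1_convex: "convex_on UNIV P1" and P1_cont: "continuous_on UNIV P1"
    and l1_strict: "strictly_convex l1"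
    and feasible: "{x. l1 (A1 *v x) \<le> 0} \<noteq> {}"
    and F_def: "F = (\<lambda>x. ereal (P1 x) + indicator_fun {x. l1 (A1 *v x) \<le> 0} x)"
    and inf_lt: "(INF x. ereal (P1 x)) < (INF x. F x)"
    and mult: "\<exists>lam::real. lam \<ge> 0 \<and> (INF x. ereal (P1 x + lam * l1 (A1 *v x))) = (INF x. F x)
                 \<and> (INF x. F x) > -\<infinity>
                 \<and> KL_exponent (\<lambda>x. ereal (P1 x + lam * l1 (A1 *v x))) \<alpha>"
    and alpha: "0 < \<alpha>" "\<alpha> < 1"
  shows "KL_exponent F \<alpha>"
proof -
  define Cs where "Cs = {x. l1 (A1 *v x) \<le> 0}"
  have Fx: "F x = (if x \<in> Cs then ereal (P1 x) else \<infinity>)" for x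
    by (simp add: F_def indicator_fun_def Cs_def)
  have l1_conv: "convex_on UNIV l1"
  proof (rule convex_onI)
    fix t x y :: "real^'q" and u :: real
    fix t :: real assume t: "0 < t" "t < 1"
    show "l1 ((1 - t) *\<^sub>R x + t *\<^sub>R y) \<le> (1 - t) * l1 x + t * l1 y"
    proof (cases "x = y")
      case True
      then show ?thesis by (simp add: algebra_simps flip: scaleR_add_left)
    next
      case False
      then show ?thesis using l1_strict t unfolding strictly_convex_def by (simp add: less_imp_le)
    qed
  qed simp
  have l1_cont: "continuous_on UNIV l1"
    by (rule convex_on_continuous[OF open_UNIV l1_conv])
  have lA_cont: "continuous_on UNIV (\<lambda>x. l1 (A1 *v x))"
    by (rule continuous_on_compose2[OF l1_cont]) (auto intro: continuous_intros)
  have Cs_closed: "closed Cs"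
    unfolding Cs_def using lA_cont by (intro closed_Collect_le continuous_intros) auto
  have subF: "P1 x + v \<bullet> (y - x) \<le> P1 y" if "v \<in> subdiff F x" "y \<in> Cs" for v x y
  proof -
    have "x \<in> Cs" using that(1) by (auto simp: subdiff_def Fx split: if_splits)
    from that(1) have h: "F y \<ge> F x + ereal (v \<bullet> (y - x))" by (simp add: subdiff_def)
    then show ?thesis using \<open>x \<in> Cs\<close> that(2) by (simp add: Fx)
  qed
  have subF_C: "x \<in> Cs" if "subdiff F x \<noteq> {}" for x
    using that by (auto simp: subdiff_def Fx split: if_splits)
  show ?thesis
    unfolding KL_exponent_def
  proof (intro conjI ballI)
    show "proper_fun F" unfolding proper_fun_def
      using feasible by (auto simp: Fx Cs_def)
  next
    have "{p :: (real^'n) \<times> real. F (fst p) \<le> ereal (snd p)} = {p. l1 (A1 *v fst p) \<le> 0} \<inter> {p. P1 (fst p) \<le> snd p}"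
      by (auto simp: Fx Cs_def)
    moreover have "closed {p :: (real^'n) \<times> real. l1 (A1 *v fst p) \<le> 0}"
      by (intro closed_Collect_le continuous_on_compose2[OF lA_cont] continuous_intros) auto
    moreover have "closed {p :: (real^'n) \<times> real. P1 (fst p) \<le> snd p}"
      by (intro closed_Collect_le continuous_on_compose2[OF P1_cont] continuous_intros) auto
    ultimately show "closed_fun F" unfolding closed_fun_def by auto
  next
    fix xh assume "xh \<in> dom_subdiff F"
    then have xhC: "xh \<in> Cs" using subF_C by (auto simp: dom_subdiff_def)
    show "\<exists>a. 0 < a \<and> (\<exists>V a0. open V \<and> xh \<in> V \<and> 0 < a0 \<and>
            (\<forall>x\<in>V. F xh < F x \<and> F x < F xh + a \<and> subdiff F x \<noteq> {} \<longrightarrow>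
              1 \<le> a0 * (1 - \<alpha>) * real_of_ereal (F x - F xh) powr - \<alpha> * infdist 0 (subdiff F x)))"
    proof (cases "\<forall>y\<in>Cs. P1 xh \<le> P1 y")
      case False
      then obtain y0 where y0: "y0 \<in> Cs" "P1 y0 < P1 xh" by (auto simp: not_le)
      define d where "d = P1 xh - P1 y0"
      define \<eta> where "\<eta> = d / (dist xh y0 + 1)"
      have d0: "d > 0" using y0 by (simp add: d_def)
      have \<eta>0: "\<eta> > 0" using d0 by (simp add: \<eta>_def add_nonneg_pos)
      show ?thesis
      proof (intro exI conjI ballI impI)
        show "(0::ereal) < 1" by simp
        show "open (ball xh 1)" by simp
        show "xh \<in> ball xh 1" by simp
        show "0 < 1/((1-\<alpha>)*\<eta>)" using \<eta>0 alpha by simp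
        fix x assume x: "x \<in> ball xh 1" and hx: "F xh < F x \<and> F x < F xh + 1 \<and> subdiff F x \<noteq> {}"
        have xC: "x \<in> Cs" using hx subF_C by blast
        define e where "e = P1 x - P1 xh"
        have e: "0 < e" "e < 1" using hx xC xhC by (auto simp: Fx e_def one_ereal_def)
        have rF: "real_of_ereal (F x - F xh) = e" using xC xhC by (simp add: Fx e_def)
        have nv: "\<eta> \<le> norm v" if v: "v \<in> subdiff F x" for v
        proof -
          have "P1 x + v \<bullet> (y0 - x) \<le> P1 y0" by (rule subF[OF v y0(1)])
          then have "d \<le> v \<bullet> (x - y0)" using e by (simp add: d_def e_def inner_diff_right)
          also have "\<dots> \<le> norm v * norm (x - y0)" by (rule norm_cauchy_schwarz)
          also have "\<dots> \<le> norm v * (dist xh y0 + 1)"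
          proof -
            have "dist x y0 \<le> dist x xh + dist xh y0" by (rule dist_triangle)
            moreover have "dist x xh < 1" using x by (simp add: dist_commute)
            ultimately have "dist x y0 \<le> dist xh y0 + 1" by linarith
            then have "norm (x - y0) \<le> dist xh y0 + 1" by (simp add: dist_norm)
            then show ?thesis by (intro mult_left_mono) auto
          qed
          finally show ?thesis unfolding \<eta>_def by (simp add: divide_le_eq add_nonneg_pos)
        qed
        have idg: "\<eta> \<le> infdist 0 (subdiff F x)" using hx nv by (intro infdist_ge_norm) auto
        have "e powr \<alpha> \<le> 1 powr \<alpha>" using e alpha by (intro powr_mono2) auto
        then have pe: "e powr (-\<alpha>) \<ge> 1" using e by (simp add: powr_minus one_le_inverse)
        have "1 = (1/\<eta>) * 1 * \<eta>" using \<eta>0 by simp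
        also have "\<dots> \<le> (1/\<eta>) * e powr (-\<alpha>) * infdist 0 (subdiff F x)"
          using pe idg \<eta>0 by (intro mult_mono mult_left_mono) auto
        also have "\<dots> = (1/((1-\<alpha>)*\<eta>)) * (1-\<alpha>) * real_of_ereal (F x - F xh) powr - \<alpha> * infdist 0 (subdiff F x)"
          using alpha unfolding rF by simp
        finally show "1 \<le> (1/((1-\<alpha>)*\<eta>)) * (1-\<alpha>) * real_of_ereal (F x - F xh) powr - \<alpha> * infdist 0 (subdiff F x)" .
      qed
    next
      case True
      from mult obtain lam where lam0': "lam \<ge> 0"
        and lamINF: "(INF x. ereal (P1 x + lam * l1 (A1 *v x))) = (INF x. F x)"
        and lamKL: "KL_exponent (\<lambda>x. ereal (P1 x + lam * l1 (A1 *v x))) \<alpha>" by blast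
      define G where "G x = P1 x + lam * l1 (A1 *v x)" for x
      have INFF: "(INF x. F x) = ereal (P1 xh)"
      proof (rule antisym)
        show "(INF x. F x) \<le> ereal (P1 xh)" using INF_lower[of xh UNIV F] xhC by (simp add: Fx)
        show "ereal (P1 xh) \<le> (INF x. F x)" using True by (intro INF_greatest) (auto simp: Fx)
      qed
      have Gge: "G x \<ge> P1 xh" for x
      proof -
        have "(INF x. ereal (G x)) \<le> ereal (G x)" by (rule INF_lower) simp
        then show ?thesis using lamINF INFF by (simp add: G_def)
      qed
      have lam0: "lam > 0"
      proof (rule ccontr)
        assume "\<not> lam > 0" then have "lam = 0" using lam0' by simp
        then show False using lamINF inf_lt by simp
      qed
      have l1xh: "l1 (A1 *v xh) \<le> 0" using xhC by (simp add: Cs_def)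
      have "lam * l1 (A1 *v xh) \<le> 0" using lam0 l1xh by (simp add: mult_nonneg_nonpos)
      then have Gxh: "G xh = P1 xh" using Gge[of xh] by (simp add: G_def)
      have lxh0: "lam * l1 (A1 *v xh) = 0" using Gxh by (simp add: G_def)
      define g where "g x = G x - P1 xh" for x
      have g_nn: "g x \<ge> 0" for x using Gge[of x] by (simp add: g_def)
      have g0: "g xh = 0" using Gxh by (simp add: g_def)
      have g_cont: "continuous_on UNIV g"
        unfolding g_def G_def by (intro continuous_intros P1_cont lA_cont)
      have Gconv: "G ((1 - t) *\<^sub>R x + t *\<^sub>R y) \<le> (1 - t) * G x + t * G y" if t: "0 \<le> t" "t \<le> 1" for t x y
      proof -
        have A: "A1 *v ((1 - t) *\<^sub>R x + t *\<^sub>R y) = (1 - t) *\<^sub>R (A1 *v x) + t *\<^sub>R (A1 *v y)"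
          by (simp add: matrix_vector_right_distrib matrix_vector_mult_scaleR)
        have p: "P1 ((1 - t) *\<^sub>R x + t *\<^sub>R y) \<le> (1 - t) * P1 x + t * P1 y"
          using convex_onD[OF P1_convex] t by simp
        have l: "l1 ((1 - t) *\<^sub>R (A1 *v x) + t *\<^sub>R (A1 *v y)) \<le> (1 - t) * l1 (A1 *v x) + t * l1 (A1 *v y)"
          using convex_onD[OF l1_conv] t by simp
        have "lam * l1 ((1 - t) *\<^sub>R (A1 *v x) + t *\<^sub>R (A1 *v y)) \<le> lam * ((1 - t) * l1 (A1 *v x) + t * l1 (A1 *v y))"
          using l lam0 by (intro mult_left_mono) auto
        then show ?thesis using p unfolding G_def A by (simp add: algebra_simps)
      qed
      have g_conv: "convex_on UNIV g"
      proof (rule convex_onI)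
        fix t :: real and x y :: "real^'n" assume "0 < t" "t < 1"
        then show "g ((1 - t) *\<^sub>R x + t *\<^sub>R y) \<le> (1 - t) * g x + t * g y"
          using Gconv[of t x y] by (simp add: g_def algebra_simps)
      qed simp
      have Sprop: "s \<in> Cs \<and> P1 s = P1 xh" if gs: "g s = 0" for s
      proof -
        have Gs: "G s = P1 xh" using gs by (simp add: g_def)
        have eqA: "A1 *v s = A1 *v xh"
        proof (rule ccontr)
          assume ne: "A1 *v s \<noteq> A1 *v xh"
          define m where "m = (1 - 1/2) *\<^sub>R s + (1/2::real) *\<^sub>R xh"
          have A: "A1 *v m = (1 - 1/2) *\<^sub>R (A1 *v s) + (1/2::real) *\<^sub>R (A1 *v xh)"
            by (simp add: m_def matrix_vector_right_distrib matrix_vector_mult_scaleR)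
          have l: "l1 (A1 *v m) < (1 - 1/2) * l1 (A1 *v s) + (1/2) * l1 (A1 *v xh)"
            using l1_strict[unfolded strictly_convex_def, rule_format, of "A1 *v s" "A1 *v xh" "1/2"] ne unfolding A by simp
          have p: "P1 m \<le> (1 - 1/2) * P1 s + (1/2) * P1 xh"
            using convex_onD[OF P1_convex, of "1/2" s xh] by (simp add: m_def)
          have "lam * l1 (A1 *v m) < lam * ((1 - 1/2) * l1 (A1 *v s) + (1/2) * l1 (A1 *v xh))"
            using l lam0 by (intro mult_strict_left_mono) auto
          then have "G m < (1 - 1/2) * G s + (1/2) * G xh" using p unfolding G_def by (simp add: algebra_simps)
          then have "G m < P1 xh" using Gs Gxh by simp
          then show False using Gge[of m] by simp
        qed
        have "lam * l1 (A1 *v xh) = 0" using Gxh by (simp add: G_def)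
        then have l0: "l1 (A1 *v xh) = 0" using lam0 by simp
        then have "l1 (A1 *v s) = 0" using eqA by simp
        then show ?thesis using Gs by (simp add: Cs_def G_def)
      qed
      let ?Ge = "\<lambda>x. ereal (P1 x + lam * l1 (A1 *v x))"
      have xh_dom: "xh \<in> dom_subdiff ?Ge"
      proof -
        have "\<forall>y. P1 xh + lam * l1 (A1 *v xh) \<le> P1 y + lam * l1 (A1 *v y)"
        proof -
          have "\<forall>y. G xh \<le> G y" using Gge Gxh by simp
          then show ?thesis unfolding G_def .
        qed
        then have "0 \<in> subdiff ?Ge xh" unfolding subdiff_def by simp
        then show ?thesis by (auto simp: dom_subdiff_def)
      qed
      from lamKL xh_dom obtain aa V a0 where aa: "aa > 0" and V: "open V" "xh \<in> V" and a00: "a0 > 0"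
        and KLG: "\<And>x. x \<in> V \<Longrightarrow> ?Ge xh < ?Ge x \<Longrightarrow> ?Ge x < ?Ge xh + aa \<Longrightarrow> subdiff ?Ge x \<noteq> {} \<Longrightarrow>
           1 \<le> a0 * (1 - \<alpha>) * real_of_ereal (?Ge x - ?Ge xh) powr - \<alpha> * infdist 0 (subdiff ?Ge x)"
        unfolding KL_exponent_def by blast
      obtain \<delta> where \<delta>: "\<delta> > 0" "ball xh \<delta> \<subseteq> V" using V open_contains_ball by blast
      define a' where "a' = (if aa = \<infinity> then 1 else real_of_ereal aa)"
      have a'0: "a' > 0" and a'aa: "\<And>r. r < a' \<Longrightarrow> ereal r < aa"
      proof -
        show "a' > 0" using aa by (cases aa) (auto simp: a'_def)
        show "\<And>r. r < a' \<Longrightarrow> ereal r < aa" using aa by (cases aa) (auto simp: a'_def)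
      qed
      define c where "c = 1/(a0*(1-\<alpha>))"
      have c0: "c > 0" using a00 alpha by (simp add: c_def)
      have KLg: "c * g y powr \<alpha> \<le> norm w"
        if y: "dist y xh < \<delta>" "0 < g y" "g y < a'" "\<forall>u. g y + w \<bullet> (u - y) \<le> g u" for y w
      proof -
        have yV: "y \<in> V" using y(1) \<delta>(2) by (auto simp: dist_commute)
        have wsub: "w \<in> subdiff ?Ge y"
          unfolding subdiff_def using y(4) by (simp add: g_def G_def add.assoc)
        have h1: "?Ge xh < ?Ge y" using y(2) by (simp add: g_def G_def lxh0)
        have h2: "?Ge y < ?Ge xh + aa"
        proof -
          have "G y - P1 xh < a'" using y(3) by (simp add: g_def)
          then have "ereal (G y - P1 xh) < aa" by (rule a'aa)
          then show ?thesis using aa unfolding G_def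
            by (cases aa) (auto simp: G_def lxh0)
        qed
        have K: "1 \<le> a0 * (1 - \<alpha>) * real_of_ereal (?Ge y - ?Ge xh) powr - \<alpha> * infdist 0 (subdiff ?Ge y)"
          using KLG[OF yV h1 h2] wsub by blast
        have rG: "real_of_ereal (?Ge y - ?Ge xh) = g y" by (simp add: g_def G_def lxh0)
        have idl: "infdist 0 (subdiff ?Ge y) \<le> norm w" using infdist_le[OF wsub, of 0] by simp
        have "1 \<le> a0 * (1 - \<alpha>) * g y powr - \<alpha> * norm w"
          using K idl a00 alpha unfolding rG
          by (smt (verit, ccfv_SIG) mult_left_mono mult_nonneg_nonneg powr_ge_zero)
        then have "g y powr \<alpha> * 1 \<le> g y powr \<alpha> * (a0 * (1 - \<alpha>) * g y powr - \<alpha> * norm w)"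
          by (intro mult_left_mono) auto
        also have "\<dots> = a0 * (1 - \<alpha>) * norm w * (g y powr \<alpha> * g y powr - \<alpha>)" by (simp add: algebra_simps)
        also have "\<dots> = a0 * (1 - \<alpha>) * norm w" using y(2) by (simp add: powr_minus)
        finally have "g y powr \<alpha> \<le> a0 * (1 - \<alpha>) * norm w" by simp
        then show ?thesis using a00 alpha unfolding c_def by (simp add: field_simps)
      qed
      define K where "K = 5/(c*(1-\<alpha>))"
      have K0: "K > 0" using c0 alpha by (simp add: K_def)
      have EB: "\<exists>s. g s = 0 \<and> dist x0 s \<le> K * g x0 powr (1-\<alpha>)"
        if "dist x0 xh < \<delta>/3" "g x0 < a'" for x0
        unfolding K_def
        by (rule error_bound[OF g_cont g_conv g_nn g0 \<delta>(1) a'0 c0 alpha KLg that]) auto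
      show ?thesis
      proof (intro exI conjI ballI impI)
        show "(0::ereal) < ereal a'" using a'0 by simp
        show "open (ball xh (\<delta>/3))" by simp
        show "xh \<in> ball xh (\<delta>/3)" using \<delta> by simp
        show "0 < K/(1-\<alpha>)" using K0 alpha by simp
        fix x assume x: "x \<in> ball xh (\<delta>/3)" and hx: "F xh < F x \<and> F x < F xh + ereal a' \<and> subdiff F x \<noteq> {}"
        have xC: "x \<in> Cs" using hx subF_C by blast
        define e where "e = P1 x - P1 xh"
        have e: "0 < e" "e < a'" using hx xC xhC by (auto simp: Fx e_def)
        have rF: "real_of_ereal (F x - F xh) = e" using xC xhC by (simp add: Fx e_def)
        have "lam * l1 (A1 *v x) \<le> 0" using lam0 xC by (simp add: Cs_def mult_nonneg_nonpos)
        then have gxe: "g x \<le> e" by (simp add: g_def G_def e_def)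
        obtain s where s: "g s = 0" "dist x s \<le> K * g x powr (1-\<alpha>)"
          using EB[of x] x gxe e by (auto simp: dist_commute)
        have sC: "s \<in> Cs" "P1 s = P1 xh" using Sprop[OF s(1)] by auto
        have "g x powr (1-\<alpha>) \<le> e powr (1-\<alpha>)" using gxe g_nn[of x] alpha by (intro powr_mono2) auto
        then have dxs: "dist x s \<le> K * e powr (1-\<alpha>)" using s(2) K0 by (smt (verit) mult_left_mono)
        have ep: "e powr (1-\<alpha>) = e / e powr \<alpha>" using e by (simp add: powr_diff)
        have nv: "e powr \<alpha> / K \<le> norm v" if v: "v \<in> subdiff F x" for v
        proof -
          have "P1 x + v \<bullet> (s - x) \<le> P1 s" by (rule subF[OF v sC(1)])
          then have "e \<le> v \<bullet> (x - s)" using sC by (simp add: e_def inner_diff_right)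
          also have "\<dots> \<le> norm v * norm (x - s)" by (rule norm_cauchy_schwarz)
          also have "\<dots> \<le> norm v * (K * (e / e powr \<alpha>))"
            using dxs ep by (intro mult_left_mono) (auto simp: dist_norm)
          finally have "e * e powr \<alpha> \<le> norm v * K * e"
            using e by (simp add: field_simps)
          then have "e powr \<alpha> \<le> norm v * K" using e by (simp add: mult.commute)
          then show ?thesis using K0 by (simp add: divide_le_eq)
        qed
        have idg: "e powr \<alpha> / K \<le> infdist 0 (subdiff F x)" using hx nv by (intro infdist_ge_norm) auto
        have "1 = K * e powr (-\<alpha>) * (e powr \<alpha> / K)" using K0 e by (simp add: powr_minus)
        also have "\<dots> \<le> K * e powr (-\<alpha>) * infdist 0 (subdiff F x)"
          using idg K0 by (intro mult_left_mono) auto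
        also have "\<dots> = K/(1-\<alpha>) * (1-\<alpha>) * real_of_ereal (F x - F xh) powr - \<alpha> * infdist 0 (subdiff F x)"
          using alpha unfolding rF by simp
        finally show "1 \<le> K/(1-\<alpha>) * (1-\<alpha>) * real_of_ereal (F x - F xh) powr - \<alpha> * infdist 0 (subdiff F x)" .
      qed
    qed
  qed
qed

end
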